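(* Let $\mathcal{T}$ be one of the following spaces of real-valued functions on $\mathbb{R}^d$, equipped with its natural topology: the Schwartz space $\mathcal{S}(\mathbb{R}^d)$, a space $L^p(\mathbb{R}^d)$ with $p>0$, or an intersection $L^p(\mathbb{R}^d)\cap L^q(\mathbb{R}^d)$ with $p,q>0$. Let $f$ be a Lévy exponent such that, for every $\varphi\in\mathcal{T}$, the function $\mathbf{r}\mapsto f(\varphi(\mathbf{r}))$ is in $L^1(\mathbb{R}^d)$, and such that the functional $\widehat{\mathscr{P}}(\varphi)=\exp\left(\int_{\mathbb{R}^d} f(\varphi(\mathbf{r}))\,\mathrm{d}\mathbf{r}\right)$ is continuous on $\mathcal{T}$. Then $\widehat{\mathscr{P}}$ is positive-definite on $\mathcal{T}$: for all $N\in\mathbb{N}$, $a_1,\dots,a_N\in\mathbb{C}$ and $\varphi_1,\dots,\varphi_N\in\mathcal{T}$, $\sum_{i,j=1}^N a_i\overline{a_j}\,\widehat{\mathscr{P}}(\varphi_i-\varphi_j)\ge 0$.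
   Context: A Lévy exponent is a function $f:\mathbb{R}\to\mathbb{C}$ of the form $f(\omega)=\mathrm{j}\mu\omega-\frac{\sigma^2\omega^2}{2}+\int_{\mathbb{R}\setminus\{0\}}\left(\mathrm{e}^{\mathrm{j}a\omega}-1-\mathrm{j}\omega a\mathbb{1}_{|a|<1}\right)V(\mathrm{d}a)$, where $\mathrm{j}=\sqrt{-1}$, $\mu\in\mathbb{R}$, $\sigma^2\ge 0$, and $V$ is a Lévy measure, i.e. a Radon measure on $\mathbb{R}\setminus\{0\}$ with $\int_{\mathbb{R}\setminus\{0\}}\min(1,a^2)V(\mathrm{d}a)<\infty$; $(\mu,\sigma^2,V)$ is its Lévy triplet. For $p\ge1$, $L^p$ carries its usual norm; for $0<p<1$, $L^p$ is the complete metric space with metric $d_p(f,g)=\int_{\mathbb{R}^d}|f-g|^p$; $L^p\cap L^q$ carries the topology given by the sum of the two corresponding metrics/norms (e.g. $d_p(f,g)+\|f-g\|_q$ if $p<1\le q$). *)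

theory Defs
  imports "HOL-Analysis.Analysis"
begin

text \<open>A Levy measure: a measure on the Borel sets of the real line that gives no mass
  to the origin (i.e. a measure on R minus 0) with finite integral of min(1,a^2).\<close>
definition levy_measure :: "real measure \<Rightarrow> bool" where
  "levy_measure V \<longleftrightarrow> sets V = sets borel \<and> emeasure V {0} = 0 \<and>
     (\<integral>\<^sup>+ a. ennreal (min 1 (a\<^sup>2)) \<partial>V) < \<infinity>"

definition levy_exponent :: "(real \<Rightarrow> complex) \<Rightarrow> bool" where
  "levy_exponent f \<longleftrightarrow> (\<exists>\<mu> \<sigma>2 V. \<sigma>2 \<ge> 0 \<and> levy_measure V \<and>
     (\<forall>\<omega>. f \<omega> = \<i> * of_real \<mu> * of_real \<omega> - of_real (\<sigma>2 * \<omega>\<^sup>2 / 2)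
        + (\<integral> a. (exp (\<i> * of_real a * of_real \<omega>) - 1
                   - \<i> * of_real \<omega> * of_real a * of_real (indicator {a. \<bar>a\<bar> < 1} a)) \<partial>V)))"

definition Lp_space :: "real \<Rightarrow> ('a::euclidean_space \<Rightarrow> real) set" where
  "Lp_space p = {\<phi>. \<phi> \<in> borel_measurable lborel \<and> integrable lborel (\<lambda>x. \<bar>\<phi> x\<bar> powr p)}"

definition Lp_dist :: "real \<Rightarrow> ('a::euclidean_space \<Rightarrow> real) \<Rightarrow> ('a \<Rightarrow> real) \<Rightarrow> real" where
  "Lp_dist p \<phi> \<psi> = (if p < 1 then (\<integral>x. \<bar>\<phi> x - \<psi> x\<bar> powr p \<partial>lborel)
                     else (\<integral>x. \<bar>\<phi> x - \<psi> x\<bar> powr p \<partial>lborel) powr (1 / p))"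

definition dirderiv :: "'a::euclidean_space \<Rightarrow> ('a \<Rightarrow> real) \<Rightarrow> 'a \<Rightarrow> real" where
  "dirderiv b g x = deriv (\<lambda>t. g (x + t *\<^sub>R b)) 0"

fun pderivs :: "'a::euclidean_space list \<Rightarrow> ('a \<Rightarrow> real) \<Rightarrow> 'a \<Rightarrow> real" where
  "pderivs [] g = g"
| "pderivs (b # bs) g = dirderiv b (pderivs bs g)"

definition schwartz_space :: "('a::euclidean_space \<Rightarrow> real) set" where
  "schwartz_space = {\<phi>.
     (\<forall>bs. set bs \<subseteq> Basis \<longrightarrow> (\<forall>x. pderivs bs \<phi> differentiable (at x))) \<and>
     (\<forall>k::nat. \<forall>bs. set bs \<subseteq> Basis \<longrightarrow>
        bounded (range (\<lambda>x. (1 + norm x) ^ k * pderivs bs \<phi> x)))}"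

definition schwartz_seminorm :: "nat \<Rightarrow> 'a::euclidean_space list \<Rightarrow> ('a \<Rightarrow> real) \<Rightarrow> real" where
  "schwartz_seminorm k bs \<phi> = (SUP x. (1 + norm x) ^ k * \<bar>pderivs bs \<phi> x\<bar>)"

definition schwartz_conv :: "(nat \<Rightarrow> 'a::euclidean_space \<Rightarrow> real) \<Rightarrow> ('a \<Rightarrow> real) \<Rightarrow> bool" where
  "schwartz_conv s \<phi> \<longleftrightarrow> (\<forall>k bs. set bs \<subseteq> Basis \<longrightarrow>
      (\<lambda>n. schwartz_seminorm k bs (s n - \<phi>)) \<longlonglongrightarrow> 0)"

text \<open>T with sequential convergence conv is one of: S(R^d); L^p (p>0); L^p \<inter> L^q (p,q>0)
  with the sum of the two metrics. All are metrizable, so continuity = sequential continuity.\<close>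
definition test_space :: "('a::euclidean_space \<Rightarrow> real) set \<Rightarrow>
    ((nat \<Rightarrow> 'a \<Rightarrow> real) \<Rightarrow> ('a \<Rightarrow> real) \<Rightarrow> bool) \<Rightarrow> bool" where
  "test_space T conv \<longleftrightarrow>
     (T = schwartz_space \<and> conv = schwartz_conv) \<or>
     (\<exists>p>0. T = Lp_space p \<and> conv = (\<lambda>s \<phi>. (\<lambda>n. Lp_dist p (s n) \<phi>) \<longlonglongrightarrow> 0)) \<or>
     (\<exists>p>0. \<exists>q>0. T = Lp_space p \<inter> Lp_space q \<and>
        conv = (\<lambda>s \<phi>. (\<lambda>n. Lp_dist p (s n) \<phi> + Lp_dist q (s n) \<phi>) \<longlonglongrightarrow> 0))"

definition seq_continuous_on ::
  "('b set) \<Rightarrow> ((nat \<Rightarrow> 'b) \<Rightarrow> 'b \<Rightarrow> bool) \<Rightarrow> ('b \<Rightarrow> complex) \<Rightarrow> bool" where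
  "seq_continuous_on T conv F \<longleftrightarrow>
     (\<forall>s \<phi>. (\<forall>n. s n \<in> T) \<longrightarrow> \<phi> \<in> T \<longrightarrow> conv s \<phi> \<longrightarrow> (\<lambda>n. F (s n)) \<longlonglongrightarrow> F \<phi>)"

definition char_functional :: "(real \<Rightarrow> complex) \<Rightarrow> ('a::euclidean_space \<Rightarrow> real) \<Rightarrow> complex" where
  "char_functional f \<phi> = exp (\<integral>r. f (\<phi> r) \<partial>lborel)"

end

theory Submission
  imports Defs "HOL-Probability.Characteristic_Functions"
begin


definition Qf :: "nat \<Rightarrow> (nat \<Rightarrow> complex) \<Rightarrow> (nat \<Rightarrow> nat \<Rightarrow> complex) \<Rightarrow> complex" where
  "Qf N c K = (\<Sum>i<N. \<Sum>j<N. c i * cnj (c j) * K i j)"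

definition nnc :: "complex \<Rightarrow> bool" where
  "nnc z \<longleftrightarrow> Im z = 0 \<and> 0 \<le> Re z"

definition psd :: "nat \<Rightarrow> (nat \<Rightarrow> nat \<Rightarrow> complex) \<Rightarrow> bool" where
  "psd N A \<longleftrightarrow> (\<forall>i<N. \<forall>j<N. A j i = cnj (A i j)) \<and> (\<forall>c. nnc (Qf N c A))"

lemma nnc_add: "nnc a \<Longrightarrow> nnc b \<Longrightarrow> nnc (a + b)"
  by (auto simp: nnc_def)

lemma nnc_sum: "(\<And>k. k \<in> S \<Longrightarrow> nnc (f k)) \<Longrightarrow> nnc (sum f S)"
  by (induction S rule: infinite_finite_induct) (auto simp: nnc_def intro!: sum_nonneg)

lemma nnc_scale: "0 \<le> r \<Longrightarrow> nnc a \<Longrightarrow> nnc (of_real r * a)"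
  by (auto simp: nnc_def)

lemma nnc_mult_cnj: "nnc (z * cnj z)"
  by (simp add: nnc_def)

lemma Qf_add: "Qf N c (\<lambda>i j. K i j + L i j) = Qf N c K + Qf N c L"
  by (simp add: Qf_def distrib_left sum.distrib)

lemma Qf_diff: "Qf N c (\<lambda>i j. K i j - L i j) = Qf N c K - Qf N c L"
  by (simp add: Qf_def right_diff_distrib sum_subtractf)

lemma Qf_scale: "Qf N c (\<lambda>i j. z * K i j) = z * Qf N c K"
  by (simp add: Qf_def sum_distrib_left mult_ac)

lemma Qf_cong: "(\<And>i j. i < N \<Longrightarrow> j < N \<Longrightarrow> K i j = L i j) \<Longrightarrow> Qf N c K = Qf N c L"
  by (simp add: Qf_def)

lemma Qf_const1: "Qf N c (\<lambda>i j. 1) = sum c {..<N} * cnj (sum c {..<N})"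
  by (simp add: Qf_def sum_product)

lemma Qf_rank1: "Qf N c (\<lambda>i j. w i * cnj (w j)) =
   (\<Sum>i<N. c i * w i) * cnj (\<Sum>i<N. c i * w i)"
  by (simp add: Qf_def sum_product mult_ac)

lemma Qf_restrict:
  "Qf (Suc N) (\<lambda>k. if k < N then c k else 0) B = Qf N c B"
  by (simp add: Qf_def)

lemma Qf_expand:
  assumes herm: "\<And>k. k < Suc N \<Longrightarrow> A N k = cnj (A k N)"
  shows "Qf (Suc N) (\<lambda>k. a k + (if k = N then t else 0)) A =
    Qf (Suc N) a A + t * cnj (\<Sum>k<Suc N. a k * A k N) + cnj t * (\<Sum>k<Suc N. a k * A k N)
    + t * cnj t * A N N"
proof -
  have "Qf (Suc N) (\<lambda>k. a k + (if k = N then t else 0)) A =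
     (\<Sum>i<Suc N. \<Sum>j<Suc N. a i * cnj (a j) * A i j)
   + (\<Sum>i<Suc N. \<Sum>j<Suc N. (if j = N then a i * cnj t * A i j else 0))
   + (\<Sum>i<Suc N. \<Sum>j<Suc N. (if i = N then t * cnj (a j) * A i j else 0))
   + (\<Sum>i<Suc N. \<Sum>j<Suc N. (if i = N \<and> j = N then t * cnj t * A i j else 0))"
    unfolding Qf_def sum.distrib[symmetric]
    by (intro sum.cong refl) (auto simp: algebra_simps)
  also have "(\<Sum>i<Suc N. \<Sum>j<Suc N. (if j = N then a i * cnj t * A i j else 0))
     = cnj t * (\<Sum>k<Suc N. a k * A k N)"
    by (simp add: sum_distrib_left mult_ac del: sum.lessThan_Suc)
  also have "(\<Sum>i<Suc N. \<Sum>j<Suc N. (if i = N then t * cnj (a j) * A i j else 0))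
     = t * (\<Sum>j<Suc N. cnj (a j) * A N j)"
  proof -
    have "(\<Sum>i<Suc N. \<Sum>j<Suc N. (if i = N then t * cnj (a j) * A i j else 0))
       = (\<Sum>i<Suc N. if i = N then (\<Sum>j<Suc N. t * cnj (a j) * A i j) else 0)"
      by (intro sum.cong refl) auto
    also have "\<dots> = (\<Sum>j<Suc N. t * cnj (a j) * A N j)"
      by (rule trans[OF sum.delta[OF finite_lessThan]]) simp
    finally show ?thesis by (simp only: sum_distrib_left mult.assoc)
  qed
  also have "(\<Sum>j<Suc N. cnj (a j) * A N j) = cnj (\<Sum>k<Suc N. a k * A k N)"
  proof -
    have "(\<Sum>j<Suc N. cnj (a j) * A N j) = (\<Sum>j<Suc N. cnj (a j * A j N))"
      by (intro sum.cong refl) (simp add: herm)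
    then show ?thesis by (simp only: cnj_sum)
  qed
  also have "(\<Sum>i<Suc N. \<Sum>j<Suc N. (if i = N \<and> j = N then t * cnj t * A i j else 0))
     = t * cnj t * A N N"
    by (simp add: sum.If_cases)
  finally show ?thesis unfolding Qf_def by (simp only: add_ac mult_ac)
qed


lemma Qf_zero_vec: "Qf N (\<lambda>_. 0) A = 0"
  by (simp add: Qf_def)

lemma Qf_sum: "finite K \<Longrightarrow> Qf N c (\<lambda>i j. \<Sum>k\<in>K. X k i j) = (\<Sum>k\<in>K. Qf N c (X k))"
proof (induction K rule: finite_induct)
  case empty
  then show ?case by (simp add: Qf_def)
next
  case (insert x F)
  then show ?case by (simp add: Qf_add)
qed

lemma psd_diag:
  assumes "psd (Suc N) A"
  shows "A N N = of_real (Re (A N N)) \<and> Re (A N N) \<ge> 0"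
proof -
  have h: "\<And>k. k < Suc N \<Longrightarrow> A N k = cnj (A k N)"
    using assms unfolding psd_def by blast
  have "nnc (Qf (Suc N) (\<lambda>k. 0 + (if k = N then 1 else 0)) A)"
    using assms unfolding psd_def by blast
  also have "Qf (Suc N) (\<lambda>k. 0 + (if k = N then 1 else 0)) A = A N N"
    by (subst Qf_expand[where N=N and A=A, OF h]) (simp_all add: Qf_zero_vec)
  finally show ?thesis by (simp add: nnc_def complex_eq_iff)
qed

lemma psd_decomp:
  "psd N A \<Longrightarrow> \<exists>w. \<forall>i<N. \<forall>j<N. A i j = (\<Sum>k<N. w k i * cnj (w k j))"
proof (induction N arbitrary: A)
  case 0
  then show ?case by simp
next
  case (Suc N A)
  have herm: "\<And>i j. i < Suc N \<Longrightarrow> j < Suc N \<Longrightarrow> A j i = cnj (A i j)"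
    using Suc.prems unfolding psd_def by blast
  have pos: "\<And>c. nnc (Qf (Suc N) c A)"
    using Suc.prems unfolding psd_def by blast
  have hN: "\<And>k. k < Suc N \<Longrightarrow> A N k = cnj (A k N)"
    using herm by blast
  define d where "d = Re (A N N)"
  have AN: "A N N = of_real d" and d0: "d \<ge> 0"
    using psd_diag[OF Suc.prems] unfolding d_def by auto
  define u where "u a = (\<Sum>k<Suc N. a k * A k N)" for a
  have key: "nnc (Qf (Suc N) a A + t * cnj (u a) + cnj t * u a + t * cnj t * of_real d)" for a t
    using pos[of "\<lambda>k. a k + (if k = N then t else 0)"] Qf_expand[where N=N and A=A, OF hN, of a t]
    unfolding u_def AN by simp
  define w where "w i = (if d = 0 then 0 else A i N / of_real (sqrt d))" for i
  define B where "B i j = A i j - w i * cnj (w j)" for i j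
  have Bherm: "\<And>i j. i < Suc N \<Longrightarrow> j < Suc N \<Longrightarrow> B j i = cnj (B i j)"
  proof -
    fix i j assume "i < Suc N" "j < Suc N"
    then have "A j i = cnj (A i j)" by (rule herm)
    then show "B j i = cnj (B i j)" unfolding B_def by (simp add: mult.commute)
  qed
  have B0: "B i N = 0" if i: "i < Suc N" for i
  proof (cases "d = 0")
    case True
    define e where "e = (\<lambda>k. if k = i then 1 else (0::complex))"
    have ue: "u e = A i N"
    proof -
      have "u e = (\<Sum>k<Suc N. if k = i then A k N else 0)"
        unfolding u_def by (intro sum.cong refl) (simp add: e_def)
      then show ?thesis using i by simp
    qed
    show ?thesis
    proof (rule ccontr)
      assume "B i N \<noteq> 0"
      then have ne: "A i N \<noteq> 0" using True unfolding B_def w_def by simp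
      define m where "m = (cmod (A i N))\<^sup>2"
      have m0: "m > 0" unfolding m_def using ne by simp
      define q where "q = Re (Qf (Suc N) e A)"
      define s where "s = (\<bar>q\<bar> + 1) / (2 * m)"
      define t where "t = - of_real s * A i N"
      have "nnc (Qf (Suc N) e A + t * cnj (u e) + cnj t * u e + t * cnj t * of_real d)"
        by (rule key)
      then have "0 \<le> Re (Qf (Suc N) e A + t * cnj (u e) + cnj t * u e)"
        using True by (simp add: nnc_def)
      also have "Re (Qf (Suc N) e A + t * cnj (u e) + cnj t * u e) = q - 2 * s * m"
      proof -
        have mm: "m = Re (A i N) * Re (A i N) + Im (A i N) * Im (A i N)"
          unfolding m_def cmod_power2 by (simp add: power2_eq_square)
        show ?thesis unfolding q_def t_def ue mm by (simp add: algebra_simps)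
      qed
      also have "2 * s * m = \<bar>q\<bar> + 1" unfolding s_def using m0 by simp
      finally show False by simp
    qed
  next
    case False
    then have dp: "d > 0" using d0 by simp
    have wN: "cnj (w N) = of_real d / of_real (sqrt d)"
      using False by (simp add: w_def AN)
    have wi: "w i = A i N / of_real (sqrt d)"
      using False by (simp add: w_def)
    have "B i N = A i N - (A i N / of_real (sqrt d)) * (of_real d / of_real (sqrt d))"
      unfolding B_def wN wi ..
    also have "\<dots> = A i N - A i N * (of_real d / (of_real (sqrt d) * of_real (sqrt d)))"
      by (simp add: field_simps)
    also have "of_real (sqrt d) * of_real (sqrt d) = (of_real d :: complex)"
      by (simp only: of_real_mult[symmetric] real_sqrt_mult_self abs_of_nonneg[OF d0])
    also have "(of_real d :: complex) / of_real d = 1"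
      using False by simp
    finally show ?thesis by simp
  qed
  have B0': "B N j = 0" if "j < Suc N" for j
    using Bherm[of j N] B0[OF that] that by simp
  have Bpos: "nnc (Qf (Suc N) a B)" for a
  proof -
    have eq: "Qf (Suc N) a B = Qf (Suc N) a A - (\<Sum>i<Suc N. a i * w i) * cnj (\<Sum>i<Suc N. a i * w i)"
      unfolding B_def by (simp only: Qf_diff Qf_rank1)
    show ?thesis
    proof (cases "d = 0")
      case True
      then show ?thesis using eq pos[of a] by (simp add: w_def)
    next
      case False
      have sw: "(\<Sum>i<Suc N. a i * w i) = u a / of_real (sqrt d)"
        unfolding u_def w_def using False by (simp add: sum_divide_distrib del: sum.lessThan_Suc)
      have sq: "of_real (sqrt d) * of_real (sqrt d) = (of_real d :: complex)"
        by (simp only: of_real_mult[symmetric] real_sqrt_mult_self abs_of_nonneg[OF d0])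
      have "Qf (Suc N) a B = Qf (Suc N) a A - u a * cnj (u a) / of_real d"
        unfolding eq sw using sq by (simp add: field_simps)
      also have "\<dots> = Qf (Suc N) a A + (- u a / of_real d) * cnj (u a) + cnj (- u a / of_real d) * u a
          + (- u a / of_real d) * cnj (- u a / of_real d) * of_real d"
        using False by (simp add: field_simps)
      finally show ?thesis using key[of a "- u a / of_real d"] by simp
    qed
  qed
  have "psd N B"
    unfolding psd_def
  proof safe
    fix i j assume "i < N" "j < N"
    then have "i < Suc N" "j < Suc N" by simp_all
    then show "B j i = cnj (B i j)" by (rule Bherm)
  next
    fix c
    show "nnc (Qf N c B)"
      using Bpos[of "\<lambda>k. if k < N then c k else 0"] by (simp only: Qf_restrict)
  qed
  from Suc.IH[OF this] obtain w' where w': "\<And>i j. i < N \<Longrightarrow> j < N \<Longrightarrow> B i j = (\<Sum>k<N. w' k i * cnj (w' k j))"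
    by blast
  define W where "W k = (if k < N then (\<lambda>i. if i < N then w' k i else 0) else w)" for k
  show ?case
  proof (intro exI allI impI)
    fix i j assume i: "i < Suc N" and j: "j < Suc N"
    have "(\<Sum>k<Suc N. W k i * cnj (W k j)) =
      (\<Sum>k<N. (if i < N then w' k i else 0) * cnj (if j < N then w' k j else 0)) + w i * cnj (w j)"
      by (simp add: W_def)
    also have "(\<Sum>k<N. (if i < N then w' k i else 0) * cnj (if j < N then w' k j else 0)) = B i j"
    proof (cases "i < N \<and> j < N")
      case True
      then show ?thesis using w' by simp
    next
      case False
      then have "i = N \<or> j = N" using i j by auto
      then show ?thesis using False B0 B0' i j by auto
    qed
    finally show "A i j = (\<Sum>k<Suc N. W k i * cnj (W k j))" unfolding B_def by simp
  qed
qed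

lemma psd_schur:
  assumes A: "psd N A" and B: "psd N B"
  shows "psd N (\<lambda>i j. A i j * B i j)"
  unfolding psd_def
proof safe
  fix i j assume "i < N" "j < N"
  then have "A j i = cnj (A i j)" "B j i = cnj (B i j)"
    using A B unfolding psd_def by blast+
  then show "A j i * B j i = cnj (A i j * B i j)" by simp
next
  fix c
  obtain w where w: "\<And>i j. i < N \<Longrightarrow> j < N \<Longrightarrow> B i j = (\<Sum>k<N. w k i * cnj (w k j))"
    using psd_decomp[OF B] by blast
  have "Qf N c (\<lambda>i j. A i j * B i j) = Qf N c (\<lambda>i j. \<Sum>k<N. A i j * (w k i * cnj (w k j)))"
    by (rule Qf_cong) (simp add: w sum_distrib_left)
  also have "\<dots> = (\<Sum>k<N. Qf N c (\<lambda>i j. A i j * (w k i * cnj (w k j))))"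
    by (rule Qf_sum) simp
  also have "\<dots> = (\<Sum>k<N. Qf N (\<lambda>i. c i * w k i) A)"
    unfolding Qf_def by (intro sum.cong refl) (simp add: mult_ac)
  finally show "nnc (Qf N c (\<lambda>i j. A i j * B i j))"
    using conjunct2[OF A[unfolded psd_def]] by (auto intro!: nnc_sum)
qed

lemma psd_power:
  assumes "psd N A" shows "psd N (\<lambda>i j. A i j ^ n)"
proof (induction n)
  case 0
  then show ?case unfolding psd_def by (simp add: Qf_const1 nnc_mult_cnj del: cnj_sum)
next
  case (Suc n)
  then show ?case using psd_schur[OF assms Suc] by simp
qed

lemma psd_exp:
  assumes "psd N A" shows "nnc (Qf N c (\<lambda>i j. exp (A i j)))"
proof -
  define X where "X n = Qf N c (\<lambda>i j. A i j ^ n /\<^sub>R fact n)" for n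
  have sums: "X sums Qf N c (\<lambda>i j. exp (A i j))"
    unfolding X_def Qf_def
    by (intro sums_sum sums_mult exp_converges)
  have Xn: "nnc (X n)" for n
  proof -
    have "X n = of_real (1 / fact n) * Qf N c (\<lambda>i j. A i j ^ n)"
    proof -
      have "(\<lambda>i j. A i j ^ n /\<^sub>R fact n) = (\<lambda>i j. of_real (1 / fact n) * A i j ^ n)"
        by (intro ext) (simp add: scaleR_conv_of_real inverse_eq_divide)
      then show ?thesis unfolding X_def by (simp only: Qf_scale)
    qed
    moreover have "nnc (Qf N c (\<lambda>i j. A i j ^ n))"
      using conjunct2[OF psd_power[OF assms, of n, unfolded psd_def]] by (rule spec)
    then have "nnc (of_real (1 / fact n) * Qf N c (\<lambda>i j. A i j ^ n))"
      by (intro nnc_scale) simp_all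
    ultimately show ?thesis by (simp only:)
  qed
  have s1: "(\<lambda>n. Im (X n)) sums Im (Qf N c (\<lambda>i j. exp (A i j)))"
    using sums_Im[OF sums] .
  have "(\<lambda>n. Im (X n)) = (\<lambda>n. 0)"
    using Xn by (simp add: nnc_def)
  with s1 have "(\<lambda>n. 0) sums Im (Qf N c (\<lambda>i j. exp (A i j)))" by simp
  then have "Im (Qf N c (\<lambda>i j. exp (A i j))) = 0"
    using sums_zero sums_unique2 by blast
  moreover have s2: "(\<lambda>n. Re (X n)) sums Re (Qf N c (\<lambda>i j. exp (A i j)))"
    using sums_Re[OF sums] .
  have "0 \<le> (\<Sum>n. Re (X n))"
    by (rule suminf_nonneg[OF sums_summable[OF s2]]) (use Xn in \<open>simp add: nnc_def\<close>)
  then have "Re (Qf N c (\<lambda>i j. exp (A i j))) \<ge> 0"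
    using sums_unique[OF s2] by simp
  ultimately show ?thesis by (simp add: nnc_def)
qed



lemma schoenberg:
  assumes cpd: "\<And>c. sum c {..<Suc N} = 0 \<Longrightarrow> nnc (Qf (Suc N) c K)"
    and herm: "\<And>i j. i < Suc N \<Longrightarrow> j < Suc N \<Longrightarrow> K j i = cnj (K i j)"
    and K0: "K N N = 0"
  shows "nnc (Qf N a (\<lambda>i j. exp (K i j)))"
proof -
  define L where "L i j = K i j - K i N - K N j" for i j
  have "psd N L"
    unfolding psd_def
  proof safe
    fix i j assume ij: "i < N" "j < N"
    have h1: "K j i = cnj (K i j)" using ij by (intro herm) auto
    have h2: "K j N = cnj (K N j)" using ij by (intro herm) auto
    have h3: "K N i = cnj (K i N)" using ij by (intro herm) auto
    show "L j i = cnj (L i j)" unfolding L_def h1 h2 h3 by simp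
  next
    fix c :: "nat \<Rightarrow> complex"
    define s where "s = sum c {..<N}"
    define c' where "c' k = (if k < N then c k else - s)" for k
    have sc: "sum c' {..<Suc N} = 0"
      unfolding c'_def s_def by simp
    have e1: "Qf (Suc N) c' K = Qf N c K + (\<Sum>i<N. c i * K i N) * cnj (- s)
        + (- s) * (\<Sum>j<N. cnj (c j) * K N j)"
    proof -
      have "Qf (Suc N) c' K = (\<Sum>i<N. \<Sum>j<N. c' i * cnj (c' j) * K i j)
         + (\<Sum>i<N. c' i * cnj (c' N) * K i N) + (\<Sum>j<N. c' N * cnj (c' j) * K N j)
         + c' N * cnj (c' N) * K N N"
        unfolding Qf_def by (simp add: sum.distrib)
      also have "(\<Sum>i<N. \<Sum>j<N. c' i * cnj (c' j) * K i j) = Qf N c K"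
        unfolding Qf_def c'_def by simp
      also have "(\<Sum>i<N. c' i * cnj (c' N) * K i N) = (\<Sum>i<N. c i * K i N) * cnj (- s)"
        unfolding c'_def by (simp add: sum_distrib_right sum_distrib_left sum_negf mult_ac)
      also have "(\<Sum>j<N. c' N * cnj (c' j) * K N j) = (- s) * (\<Sum>j<N. cnj (c j) * K N j)"
        unfolding c'_def by (simp add: sum_distrib_left mult_ac)
      finally show ?thesis using K0 by simp
    qed
    have e2: "Qf N c L = Qf N c K - (\<Sum>i<N. c i * K i N) * cnj s
        - s * (\<Sum>j<N. cnj (c j) * K N j)"
    proof -
      have "Qf N c L = Qf N c K - Qf N c (\<lambda>i j. K i N) - Qf N c (\<lambda>i j. K N j)"
        unfolding L_def by (simp only: Qf_diff)
      also have "Qf N c (\<lambda>i j. K i N) = (\<Sum>i<N. c i * K i N) * cnj s"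
        unfolding Qf_def s_def cnj_sum by (simp add: sum_distrib_left sum_distrib_right mult_ac)
      also have "Qf N c (\<lambda>i j. K N j) = s * (\<Sum>j<N. cnj (c j) * K N j)"
        unfolding Qf_def s_def by (simp only: sum_product mult.assoc)
      finally show ?thesis .
    qed
    have "Qf N c L = Qf (Suc N) c' K" unfolding e1 e2 by simp
    then show "nnc (Qf N c L)" using cpd[OF sc] by simp
  qed
  define b where "b i = a i * exp (K i N)" for i
  have "nnc (Qf N b (\<lambda>i j. exp (L i j)))" by (rule psd_exp) fact
  also have "Qf N b (\<lambda>i j. exp (L i j)) = Qf N a (\<lambda>i j. exp (K i j))"
    unfolding Qf_def
  proof (intro sum.cong refl)
    fix i j assume "i \<in> {..<N}" "j \<in> {..<N}"
    then have h2: "K j N = cnj (K N j)" by (intro herm) auto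
    have "cnj (exp (K j N)) = exp (K N j)" unfolding h2 exp_cnj by simp
    then show "b i * cnj (b j) * exp (L i j) = a i * cnj (a j) * exp (K i j)"
      unfolding b_def L_def by (simp add: exp_diff exp_add field_simps)
  qed
  finally show ?thesis .
qed



lemma nnc_integral:
  fixes F :: "'b \<Rightarrow> complex"
  assumes "integrable M F" "\<And>x. x \<in> space M \<Longrightarrow> nnc (F x)"
  shows "nnc (integral\<^sup>L M F)"
proof -
  have "integral\<^sup>L M F = integral\<^sup>L M (\<lambda>x. complex_of_real (Re (F x)))"
    by (rule Bochner_Integration.integral_cong) (use assms(2) in \<open>auto simp: nnc_def complex_eq_iff\<close>)
  also have "\<dots> = complex_of_real (integral\<^sup>L M (\<lambda>x. Re (F x)))" by simp
  finally show ?thesis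
    using assms(2) by (simp add: nnc_def integral_nonneg)
qed

lemma Qf_integrable:
  assumes "\<And>i j. i < N \<Longrightarrow> j < N \<Longrightarrow> integrable M (\<lambda>x. K x i j)"
  shows "integrable M (\<lambda>x. Qf N c (K x))"
  unfolding Qf_def by (intro Bochner_Integration.integrable_sum Bochner_Integration.integrable_mult_right) (auto intro: assms)

lemma Qf_integral:
  assumes "\<And>i j. i < N \<Longrightarrow> j < N \<Longrightarrow> integrable M (\<lambda>x. K x i j)"
  shows "Qf N c (\<lambda>i j. \<integral>x. K x i j \<partial>M) = (\<integral>x. Qf N c (K x) \<partial>M)"
proof -
  have "(\<integral>x. Qf N c (K x) \<partial>M) = (\<Sum>i<N. \<integral>x. (\<Sum>j<N. c i * cnj (c j) * K x i j) \<partial>M)"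
    unfolding Qf_def by (rule Bochner_Integration.integral_sum) (auto intro!: Bochner_Integration.integrable_sum Bochner_Integration.integrable_mult_right assms)
  also have "\<dots> = (\<Sum>i<N. \<Sum>j<N. \<integral>x. c i * cnj (c j) * K x i j \<partial>M)"
    by (intro sum.cong refl Bochner_Integration.integral_sum) (auto intro!: Bochner_Integration.integrable_mult_right assms)
  also have "\<dots> = Qf N c (\<lambda>i j. \<integral>x. K x i j \<partial>M)"
    unfolding Qf_def by simp
  finally show ?thesis ..
qed

lemma nnc_integral_Qf:
  assumes "\<And>i j. i < N \<Longrightarrow> j < N \<Longrightarrow> integrable M (\<lambda>x. K x i j)"
    and "\<And>x. x \<in> space M \<Longrightarrow> nnc (Qf N c (K x))"
  shows "nnc (Qf N c (\<lambda>i j. \<integral>x. K x i j \<partial>M))"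
  using nnc_integral[OF Qf_integrable[OF assms(1)] assms(2)] Qf_integral[OF assms(1)] by simp

lemma Qf_left: "Qf N c (\<lambda>i j. X i) = (\<Sum>i<N. c i * X i) * cnj (sum c {..<N})"
  unfolding Qf_def cnj_sum by (simp add: sum_distrib_left sum_distrib_right mult_ac)

lemma Qf_right: "Qf N c (\<lambda>i j. X j) = sum c {..<N} * (\<Sum>j<N. cnj (c j) * X j)"
  unfolding Qf_def by (simp only: sum_product mult.assoc)

lemma Qf_left0: "sum c {..<N} = 0 \<Longrightarrow> Qf N c (\<lambda>i j. X i) = 0"
  by (simp add: Qf_left del: cnj_sum)

lemma Qf_right0: "sum c {..<N} = 0 \<Longrightarrow> Qf N c (\<lambda>i j. X j) = 0"
  by (simp add: Qf_right)



definition levy_g :: "real \<Rightarrow> real \<Rightarrow> complex" where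
  "levy_g \<omega> a = exp (\<i> * of_real a * of_real \<omega>) - 1
                   - \<i> * of_real \<omega> * of_real a * of_real (indicator {a. \<bar>a\<bar> < 1} a)"

lemma levy_exponent_E:
  assumes "levy_exponent f"
  obtains \<mu> \<sigma>2 V where "\<sigma>2 \<ge> 0" "levy_measure V"
    "\<And>\<omega>. f \<omega> = \<i> * of_real \<mu> * of_real \<omega> - of_real (\<sigma>2 * \<omega>\<^sup>2 / 2) + (\<integral>a. levy_g \<omega> a \<partial>V)"
  using assms unfolding levy_exponent_def levy_g_def by blast

lemma levy_g_bound: "cmod (levy_g \<omega> a) \<le> (2 + \<omega>\<^sup>2) * min 1 (a\<^sup>2)"
proof (cases "\<bar>a\<bar> < 1")
  case True
  have "levy_g \<omega> a = iexp (a * \<omega>) - (\<Sum>k\<le>1. (\<i> * of_real (a * \<omega>))^k / fact k)"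
    unfolding levy_g_def using True by (simp add: algebra_simps)
  then have "cmod (levy_g \<omega> a) \<le> \<bar>a * \<omega>\<bar> ^ 2 / 2"
    using iexp_approx1[of "a * \<omega>" 1] by (simp add: numeral_2_eq_2)
  also have "\<dots> = a\<^sup>2 * \<omega>\<^sup>2 / 2" by (simp add: power_mult_distrib)
  also have "\<dots> \<le> (2 + \<omega>\<^sup>2) * a\<^sup>2"
  proof -
    have h: "0 \<le> a\<^sup>2 * \<omega>\<^sup>2" "0 \<le> a\<^sup>2" by simp_all
    then show ?thesis by (simp add: ring_distribs mult.commute)
  qed
  also have "a\<^sup>2 = min 1 (a\<^sup>2)"
  proof -
    have "a\<^sup>2 < 1" using True abs_square_less_1 by blast
    then show ?thesis by (simp add: min_def)
  qed
  finally show ?thesis .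
next
  case False
  have "levy_g \<omega> a = iexp (a * \<omega>) - (\<Sum>k\<le>0. (\<i> * of_real (a * \<omega>))^k / fact k)"
    unfolding levy_g_def using False by (simp add: mult.assoc)
  then have "cmod (levy_g \<omega> a) \<le> 2"
    using iexp_approx2[of "a * \<omega>" 0] by simp
  also have "\<dots> \<le> (2 + \<omega>\<^sup>2) * min 1 (a\<^sup>2)"
  proof -
    have "\<not> a\<^sup>2 < 1" using False abs_square_less_1 by blast
    then have "min 1 (a\<^sup>2) = 1" by (simp add: min_def)
    then show ?thesis by simp
  qed
  finally show ?thesis .
qed

lemma levy_g_measurable: "levy_g \<omega> \<in> borel_measurable borel"
  unfolding levy_g_def by measurable

lemma levy_g_integrable:
  assumes "levy_measure V" shows "integrable V (levy_g \<omega>)"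
proof -
  have sets: "sets V = sets borel" using assms unfolding levy_measure_def by simp
  have fin: "(\<integral>\<^sup>+ a. ennreal (min 1 (a\<^sup>2)) \<partial>V) < \<infinity>"
    using assms unfolding levy_measure_def by simp
  have m1: "(\<lambda>a. min 1 (a\<^sup>2)) \<in> borel_measurable V"
    unfolding measurable_cong_sets[OF sets refl] by measurable
  have "integrable V (\<lambda>a. min 1 (a\<^sup>2::real))"
    by (rule integrableI_nonneg[OF m1]) (use fin in auto)
  then have "integrable V (\<lambda>a. (2 + \<omega>\<^sup>2) * min 1 (a\<^sup>2::real))"
    by simp
  moreover have "levy_g \<omega> \<in> borel_measurable V"
    unfolding measurable_cong_sets[OF sets refl] by (rule levy_g_measurable)
  ultimately show ?thesis
    by (rule Bochner_Integration.integrable_bound) (auto intro!: AE_I2 order.trans[OF levy_g_bound])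
qed



lemma levy_f0: assumes "levy_exponent f" shows "f 0 = 0"
proof -
  obtain \<mu> \<sigma>2 V where f: "\<And>\<omega>. f \<omega> = \<i> * of_real \<mu> * of_real \<omega> - of_real (\<sigma>2 * \<omega>\<^sup>2 / 2) + (\<integral>a. levy_g \<omega> a \<partial>V)"
    using levy_exponent_E[OF assms] by metis
  have "levy_g 0 = (\<lambda>a. 0)" by (auto simp: levy_g_def)
  then show ?thesis by (simp add: f)
qed

lemma levy_f_neg: assumes "levy_exponent f" shows "f (- \<omega>) = cnj (f \<omega>)"
proof -
  obtain \<mu> \<sigma>2 V where f: "\<And>\<omega>. f \<omega> = \<i> * of_real \<mu> * of_real \<omega> - of_real (\<sigma>2 * \<omega>\<^sup>2 / 2) + (\<integral>a. levy_g \<omega> a \<partial>V)"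
    using levy_exponent_E[OF assms] by metis
  have "\<And>a. levy_g (- \<omega>) a = cnj (levy_g \<omega> a)"
    by (simp add: levy_g_def exp_cnj)
  then show ?thesis by (simp add: f)
qed

lemma levy_g_Qf:
  assumes "sum c {..<M} = 0"
  shows "nnc (Qf M c (\<lambda>i j. levy_g (x i - x j) a))"
proof -
  define e where "e i = exp (\<i> * of_real a * of_real (x i))" for i
  define X where "X i = complex_of_real (x i)" for i
  define k where "k = \<i> * of_real a * of_real (indicator {a. \<bar>a\<bar> < 1} a :: real)"
  have eq: "levy_g (x i - x j) a = (e i * cnj (e j) - 1) - k * (X i - X j)" for i j
  proof -
    have "exp (\<i> * of_real a * of_real (x i - x j)) =
          exp (\<i> * of_real a * of_real (x i) + (- (\<i> * of_real a * of_real (x j))))"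
      by (simp add: algebra_simps)
    also have "\<dots> = e i * cnj (e j)"
      unfolding exp_add e_def by (simp add: exp_cnj)
    finally show ?thesis unfolding levy_g_def k_def X_def by (simp add: algebra_simps)
  qed
  have "Qf M c (\<lambda>i j. levy_g (x i - x j) a) =
        Qf M c (\<lambda>i j. (e i * cnj (e j) - 1) - k * (X i - X j))"
    by (simp only: eq)
  also have "\<dots> = Qf M c (\<lambda>i j. e i * cnj (e j)) - Qf M c (\<lambda>i j. 1)
      - k * (Qf M c (\<lambda>i j. X i) - Qf M c (\<lambda>i j. X j))"
    by (simp only: Qf_diff Qf_scale)
  also have "\<dots> = (\<Sum>i<M. c i * e i) * cnj (\<Sum>i<M. c i * e i)"
    using assms by (simp add: Qf_rank1 Qf_left0 Qf_right0 Qf_const1 del: cnj_sum)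
  finally show ?thesis using nnc_mult_cnj[of "\<Sum>i<M. c i * e i"] by (simp only:)
qed

lemma levy_cpd:
  assumes "levy_exponent f" "sum c {..<M} = 0"
  shows "nnc (Qf M c (\<lambda>i j. f (x i - x j)))"
proof -
  obtain \<mu> \<sigma>2 V where s0: "\<sigma>2 \<ge> 0" and V: "levy_measure V" and
    f: "\<And>\<omega>. f \<omega> = \<i> * of_real \<mu> * of_real \<omega> - of_real (\<sigma>2 * \<omega>\<^sup>2 / 2) + (\<integral>a. levy_g \<omega> a \<partial>V)"
    using levy_exponent_E[OF assms(1)] by metis
  define X where "X i = complex_of_real (x i)" for i
  define S where "S = (\<Sum>i<M. c i * X i)"
  have eq: "f (x i - x j) = (\<i> * of_real \<mu>) * (X i - X j)
      - of_real (\<sigma>2 / 2) * ((X i * X i + X j * X j) - 2 * (X i * cnj (X j)))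
      + (\<integral>a. levy_g (x i - x j) a \<partial>V)" for i j
    unfolding f X_def by (simp add: power2_eq_square field_simps)
  have "Qf M c (\<lambda>i j. f (x i - x j)) =
      (\<i> * of_real \<mu>) * (Qf M c (\<lambda>i j. X i) - Qf M c (\<lambda>i j. X j))
      - of_real (\<sigma>2 / 2) * ((Qf M c (\<lambda>i j. X i * X i) + Qf M c (\<lambda>i j. X j * X j))
          - 2 * Qf M c (\<lambda>i j. X i * cnj (X j)))
      + Qf M c (\<lambda>i j. \<integral>a. levy_g (x i - x j) a \<partial>V)"
    by (simp only: eq Qf_diff Qf_add Qf_scale)
  also have "\<dots> = of_real \<sigma>2 * (S * cnj S) + Qf M c (\<lambda>i j. \<integral>a. levy_g (x i - x j) a \<partial>V)"
    using assms(2) unfolding S_def by (simp add: Qf_rank1 Qf_left0 Qf_right0 del: cnj_sum)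
  finally have e: "Qf M c (\<lambda>i j. f (x i - x j)) = of_real \<sigma>2 * (S * cnj S) + Qf M c (\<lambda>i j. \<integral>a. levy_g (x i - x j) a \<partial>V)" .
  have "nnc (Qf M c (\<lambda>i j. \<integral>a. levy_g (x i - x j) a \<partial>V))"
    by (rule nnc_integral_Qf) (auto intro: levy_g_integrable[OF V] levy_g_Qf[OF assms(2)])
  then show ?thesis unfolding e by (intro nnc_add nnc_scale s0 nnc_mult_cnj)
qed



lemma Lp_zero: "(\<lambda>_. 0) \<in> Lp_space p"
  unfolding Lp_space_def by simp

lemma powr_diff_bound:
  fixes u v p :: real
  assumes "p > 0"
  shows "\<bar>u - v\<bar> powr p \<le> 2 powr p * (\<bar>u\<bar> powr p + \<bar>v\<bar> powr p)"
proof -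
  define m where "m = max \<bar>u\<bar> \<bar>v\<bar>"
  have "\<bar>u - v\<bar> \<le> 2 * m" unfolding m_def by linarith
  then have "\<bar>u - v\<bar> powr p \<le> (2 * m) powr p"
    using assms by (intro powr_mono2) auto
  also have "\<dots> = 2 powr p * m powr p"
    unfolding m_def by (simp add: powr_mult)
  also have "m powr p \<le> \<bar>u\<bar> powr p + \<bar>v\<bar> powr p"
    unfolding m_def by (cases "\<bar>u\<bar> \<le> \<bar>v\<bar>") (simp_all add: max_def)
  then have "2 powr p * m powr p \<le> 2 powr p * (\<bar>u\<bar> powr p + \<bar>v\<bar> powr p)"
    by (intro mult_left_mono) auto
  finally show ?thesis .
qed

lemma Lp_diff:
  assumes "p > 0" "\<phi> \<in> Lp_space p" "\<psi> \<in> Lp_space p"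
  shows "\<phi> - \<psi> \<in> Lp_space p"
proof -
  have m: "\<phi> \<in> borel_measurable lborel" "\<psi> \<in> borel_measurable lborel"
    and i: "integrable lborel (\<lambda>x. \<bar>\<phi> x\<bar> powr p)" "integrable lborel (\<lambda>x. \<bar>\<psi> x\<bar> powr p)"
    using assms unfolding Lp_space_def by auto
  have md: "(\<lambda>x. \<phi> x - \<psi> x) \<in> borel_measurable lborel"
    using m by measurable
  have "integrable lborel (\<lambda>x. 2 powr p * (\<bar>\<phi> x\<bar> powr p + \<bar>\<psi> x\<bar> powr p))"
    using i by simp
  moreover have "(\<lambda>x. \<bar>\<phi> x - \<psi> x\<bar> powr p) \<in> borel_measurable lborel"
    using md by measurable
  ultimately have "integrable lborel (\<lambda>x. \<bar>\<phi> x - \<psi> x\<bar> powr p)"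
    by (rule Bochner_Integration.integrable_bound)
       (auto intro!: AE_I2 order.trans[OF _ abs_ge_self] powr_diff_bound assms(1))
  then show ?thesis using md unfolding Lp_space_def fun_diff_def by simp
qed

lemma dirderiv_diff:
  fixes g h :: "'a::euclidean_space \<Rightarrow> real"
  assumes "\<And>x. g differentiable (at x)" "\<And>x. h differentiable (at x)"
  shows "dirderiv b (\<lambda>y. g y - h y) x = dirderiv b g x - dirderiv b h x"
proof -
  have lin: "(\<lambda>t. x + t *\<^sub>R b) differentiable (at 0)"
    by (intro differentiable_add differentiable_const differentiable_scaleR differentiable_ident)
  have "(\<lambda>t. g (x + t *\<^sub>R b)) differentiable (at 0)"
    using differentiable_compose[of g "\<lambda>t. x + t *\<^sub>R b" 0 UNIV] assms(1) lin by simp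
  then have dg: "(\<lambda>t. g (x + t *\<^sub>R b)) field_differentiable (at 0)"
    by (simp add: field_differentiable_def real_differentiable_def)
  have "(\<lambda>t. h (x + t *\<^sub>R b)) differentiable (at 0)"
    using differentiable_compose[of h "\<lambda>t. x + t *\<^sub>R b" 0 UNIV] assms(2) lin by simp
  then have dh: "(\<lambda>t. h (x + t *\<^sub>R b)) field_differentiable (at 0)"
    by (simp add: field_differentiable_def real_differentiable_def)
  show ?thesis
    unfolding dirderiv_def using deriv_diff[OF dg dh] by simp
qed

lemma pderivs_diff:
  assumes "\<forall>bs. set bs \<subseteq> Basis \<longrightarrow> (\<forall>x. pderivs bs \<phi> differentiable (at x))"
    and "\<forall>bs. set bs \<subseteq> Basis \<longrightarrow> (\<forall>x. pderivs bs \<psi> differentiable (at x))"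
  shows "set bs \<subseteq> Basis \<Longrightarrow> pderivs bs (\<lambda>x. \<phi> x - \<psi> x) = (\<lambda>x. pderivs bs \<phi> x - pderivs bs \<psi> x)"
proof (induction bs)
  case Nil
  then show ?case by simp
next
  case (Cons b bs)
  then have sb: "set bs \<subseteq> Basis" by simp
  have "pderivs (b # bs) (\<lambda>x. \<phi> x - \<psi> x) = dirderiv b (\<lambda>x. pderivs bs \<phi> x - pderivs bs \<psi> x)"
    using Cons.IH[OF sb] by simp
  also have "\<dots> = (\<lambda>x. pderivs (b # bs) \<phi> x - pderivs (b # bs) \<psi> x)"
    using assms sb by (auto intro!: dirderiv_diff)
  finally show ?case .
qed

lemma pderivs_zero: "pderivs bs (\<lambda>_. 0) = (\<lambda>_. 0)"
  by (induction bs) (simp_all add: dirderiv_def)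

lemma schwartz_zero: "(\<lambda>_. 0) \<in> schwartz_space"
  unfolding schwartz_space_def by (simp add: pderivs_zero)

lemma schwartz_diff:
  assumes "\<phi> \<in> schwartz_space" "\<psi> \<in> schwartz_space"
  shows "\<phi> - \<psi> \<in> schwartz_space"
proof -
  have d1: "\<forall>bs. set bs \<subseteq> Basis \<longrightarrow> (\<forall>x. pderivs bs \<phi> differentiable (at x))"
    and d2: "\<forall>bs. set bs \<subseteq> Basis \<longrightarrow> (\<forall>x. pderivs bs \<psi> differentiable (at x))"
    and b1: "\<forall>k::nat. \<forall>bs. set bs \<subseteq> Basis \<longrightarrow> bounded (range (\<lambda>x. (1 + norm x) ^ k * pderivs bs \<phi> x))"
    and b2: "\<forall>k::nat. \<forall>bs. set bs \<subseteq> Basis \<longrightarrow> bounded (range (\<lambda>x. (1 + norm x) ^ k * pderivs bs \<psi> x))"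
    using assms unfolding schwartz_space_def by auto
  have eq: "\<phi> - \<psi> = (\<lambda>x. \<phi> x - \<psi> x)" by (simp add: fun_diff_def)
  show ?thesis
    unfolding schwartz_space_def eq
  proof (intro CollectI conjI allI impI)
    fix bs :: "'a list" and x assume bs: "set bs \<subseteq> Basis"
    show "pderivs bs (\<lambda>x. \<phi> x - \<psi> x) differentiable (at x)"
      unfolding pderivs_diff[OF d1 d2 bs]
      using d1 d2 bs by (intro differentiable_diff) auto
  next
    fix k :: nat and bs :: "'a list" assume bs: "set bs \<subseteq> Basis"
    obtain B1 where B1: "\<And>x. norm ((1 + norm x) ^ k * pderivs bs \<phi> x) \<le> B1"
      using b1 bs unfolding bounded_iff by blast
    obtain B2 where B2: "\<And>x. norm ((1 + norm x) ^ k * pderivs bs \<psi> x) \<le> B2"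
      using b2 bs unfolding bounded_iff by blast
    have "norm ((1 + norm x) ^ k * (pderivs bs \<phi> x - pderivs bs \<psi> x)) \<le> B1 + B2" for x
    proof -
      have "norm ((1 + norm x) ^ k * (pderivs bs \<phi> x - pderivs bs \<psi> x))
          \<le> norm ((1 + norm x) ^ k * pderivs bs \<phi> x) + norm ((1 + norm x) ^ k * pderivs bs \<psi> x)"
        by (simp add: right_diff_distrib norm_triangle_ineq4)
      then show ?thesis using B1[of x] B2[of x] by linarith
    qed
    then show "bounded (range (\<lambda>x. (1 + norm x) ^ k * pderivs bs (\<lambda>x. \<phi> x - \<psi> x) x))"
      unfolding pderivs_diff[OF d1 d2 bs] bounded_iff by blast
  qed
qed

lemma test_space_zero: "test_space T conv \<Longrightarrow> (\<lambda>_. 0) \<in> T"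
  unfolding test_space_def using schwartz_zero Lp_zero by auto

lemma test_space_diff: "test_space T conv \<Longrightarrow> \<phi> \<in> T \<Longrightarrow> \<psi> \<in> T \<Longrightarrow> \<phi> - \<psi> \<in> T"
  unfolding test_space_def using schwartz_diff Lp_diff by auto



theorem proposition3p4:
  fixes f :: "real \<Rightarrow> complex"
    and T :: "('a::euclidean_space \<Rightarrow> real) set"
    and conv :: "(nat \<Rightarrow> 'a \<Rightarrow> real) \<Rightarrow> ('a \<Rightarrow> real) \<Rightarrow> bool"
  assumes "test_space T conv"
    and "levy_exponent f"
    and "\<And>\<phi>. \<phi> \<in> T \<Longrightarrow> integrable lborel (\<lambda>r. f (\<phi> r))"
    and "seq_continuous_on T conv (char_functional f)"
  shows "\<forall>N::nat. \<forall>a::nat \<Rightarrow> complex. \<forall>\<phi>::nat \<Rightarrow> 'a \<Rightarrow> real.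
           (\<forall>i<N. \<phi> i \<in> T) \<longrightarrow>
           (let S = (\<Sum>i<N. \<Sum>j<N. a i * cnj (a j) * char_functional f (\<phi> i - \<phi> j))
            in Im S = 0 \<and> Re S \<ge> 0)"
proof (intro allI impI)
  fix N :: nat and a :: "nat \<Rightarrow> complex" and \<phi> :: "nat \<Rightarrow> 'a \<Rightarrow> real"
  assume \<phi>T: "\<forall>i<N. \<phi> i \<in> T"
  define \<psi> where "\<psi> k = (if k < N then \<phi> k else (\<lambda>_. 0))" for k
  have \<psi>T: "\<psi> k \<in> T" for k
    unfolding \<psi>_def using \<phi>T test_space_zero[OF assms(1)] by auto
  have int: "integrable lborel (\<lambda>r. f (\<psi> i r - \<psi> j r))" for i j
    using assms(3)[OF test_space_diff[OF assms(1) \<psi>T \<psi>T]] by (simp add: fun_diff_def)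
  define K where "K i j = (\<integral>r. f (\<psi> i r - \<psi> j r) \<partial>lborel)" for i j
  have cpd: "nnc (Qf (Suc N) c K)" if "sum c {..<Suc N} = 0" for c
    unfolding K_def
    by (rule nnc_integral_Qf) (auto intro: int levy_cpd[OF assms(2) that])
  have herm: "K j i = cnj (K i j)" for i j
  proof -
    have "K j i = (\<integral>r. cnj (f (\<psi> i r - \<psi> j r)) \<partial>lborel)"
      unfolding K_def levy_f_neg[OF assms(2), symmetric] by simp
    then show ?thesis unfolding K_def by simp
  qed
  have K0: "K N N = 0"
    unfolding K_def using levy_f0[OF assms(2)] by simp
  have "nnc (Qf N a (\<lambda>i j. exp (K i j)))"
    by (rule schoenberg[OF cpd herm K0])
  also have "Qf N a (\<lambda>i j. exp (K i j)) = Qf N a (\<lambda>i j. char_functional f (\<phi> i - \<phi> j))"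
    by (rule Qf_cong) (simp add: K_def \<psi>_def char_functional_def fun_diff_def)
  finally show "let S = (\<Sum>i<N. \<Sum>j<N. a i * cnj (a j) * char_functional f (\<phi> i - \<phi> j))
            in Im S = 0 \<and> Re S \<ge> 0"
    unfolding Qf_def nnc_def Let_def .
qed

end
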